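(* For all $i\in[1,n-1]$, $j'(i)\le j'(i+1)$.
   Context: Let $v_1,\dots,v_n$ be points of a metric space with metric $|\cdot|$ (symmetric, nonnegative, $|v_iv_j|=0$ iff $i=j$, triangle inequality). For $i\le j$ let $d_P(v_i,v_j)=\sum_{k=i}^{j-1}|v_kv_{k+1}|$ and $d_P(v_j,v_i)=d_P(v_i,v_j)$. For $1\le i\le j\le n$: $\beta(i,j)=\max_{k\in[i,j]}\min\{d_P(v_i,v_k),|v_iv_j|+d_P(v_k,v_j)\}$; $\gamma(i,j)=|v_iv_j|+d_P(v_j,v_n)$ if $j<n$ and $\gamma(i,n)=0$. For $i\in[1,n]$, $j'(i)$ is the smallest index $j\in[i,n]$ with $\gamma(i,j)\le\beta(i,j)$. *)

theory Defs
  imports "HOL-Analysis.Analysis"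
begin

text \<open>Points v_1,...,v_n of a metric space are given as v :: nat => 'a (metric_space),
  only the values at indices 1..n matter. |v_i v_j| is dist (v i) (v j).\<close>

definition dP :: "(nat \<Rightarrow> 'a::metric_space) \<Rightarrow> nat \<Rightarrow> nat \<Rightarrow> real" where
  "dP v i j = (\<Sum>k\<in>{min i j..<max i j}. dist (v k) (v (Suc k)))"

definition beta :: "(nat \<Rightarrow> 'a::metric_space) \<Rightarrow> nat \<Rightarrow> nat \<Rightarrow> real" where
  "beta v i j = Max ((\<lambda>k. min (dP v i k) (dist (v i) (v j) + dP v k j)) ` {i..j})"

definition gamma :: "(nat \<Rightarrow> 'a::metric_space) \<Rightarrow> nat \<Rightarrow> nat \<Rightarrow> nat \<Rightarrow> real" where
  "gamma v n i j = (if j < n then dist (v i) (v j) + dP v j n else 0)"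

definition jprime :: "(nat \<Rightarrow> 'a::metric_space) \<Rightarrow> nat \<Rightarrow> nat \<Rightarrow> nat" where
  "jprime v n i = (LEAST j. i \<le> j \<and> j \<le> n \<and> gamma v n i j \<le> beta v i j)"

end

theory Submission
  imports Defs
begin

lemma dP_nonneg: "0 \<le> dP v i j"
  unfolding dP_def by (intro sum_nonneg) auto

lemma dP_split: "i < k \<Longrightarrow> dP v i k = dist (v i) (v (Suc i)) + dP v (Suc i) k"
  unfolding dP_def by (simp add: min_def max_def sum.atLeast_Suc_lessThan)

lemma beta_fin: "finite ((\<lambda>k. min (dP v i k) (dist (v i) (v j) + dP v k j)) ` {i..j})"
  by simp

lemma beta_nonneg: "i \<le> j \<Longrightarrow> 0 \<le> beta v i j"
proof -
  assume "i \<le> j"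
  hence "min (dP v i i) (dist (v i) (v j) + dP v i j) \<le> beta v i j"
    unfolding beta_def by (intro Max_ge) auto
  moreover have "0 \<le> min (dP v i i) (dist (v i) (v j) + dP v i j)"
    using dP_nonneg[of v] by simp
  ultimately show ?thesis by linarith
qed

theorem lemma5:
  fixes v :: "nat \<Rightarrow> 'a::metric_space" and n i :: nat
  assumes "inj_on v {1..n}"
    and "1 \<le> i" and "i \<le> n - 1"
  shows "jprime v n i \<le> jprime v n (i + 1)"
proof -
  have n: "i + 1 \<le> n" using assms by linarith
  define j where "j = jprime v n (i + 1)"
  have ex: "i + 1 \<le> n \<and> n \<le> n \<and> gamma v n (i+1) n \<le> beta v (i+1) n"
    using n beta_nonneg[of "i+1" n v] by (simp add: gamma_def)
  have J: "i + 1 \<le> j \<and> j \<le> n \<and> gamma v n (i+1) j \<le> beta v (i+1) j"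
    unfolding j_def jprime_def by (rule LeastI[of _ n], rule ex)
  have G: "gamma v n i j \<le> beta v i j"
  proof (cases "j < n")
    case False
    thus ?thesis using J beta_nonneg[of i j v] by (simp add: gamma_def)
  next
    case True
    let ?f = "\<lambda>k. min (dP v (i+1) k) (dist (v (i+1)) (v j) + dP v k j)"
    have "beta v (i+1) j \<in> ?f ` {i+1..j}"
      unfolding beta_def using J by (intro Max_in) auto
    then obtain k where k: "k \<in> {i+1..j}" and bk: "beta v (i+1) j = ?f k" by auto
    have h: "dist (v (i+1)) (v j) + dP v j n \<le> ?f k"
      using J True bk by (simp add: gamma_def)
    have h1: "dist (v (i+1)) (v j) + dP v j n \<le> dP v (i+1) k" using h by simp
    have h2: "dP v j n \<le> dP v k j" using h by simp
    have sp: "dP v i k = dist (v i) (v (Suc i)) + dP v (Suc i) k"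
      using k by (intro dP_split) auto
    have tri: "dist (v i) (v j) \<le> dist (v i) (v (Suc i)) + dist (v (Suc i)) (v j)"
      by (rule dist_triangle)
    have "dist (v i) (v j) + dP v j n \<le> min (dP v i k) (dist (v i) (v j) + dP v k j)"
      using h1 h2 sp tri by simp
    also have "\<dots> \<le> beta v i j"
      unfolding beta_def using k by (intro Max_ge) auto
    finally show ?thesis using True by (simp add: gamma_def)
  qed
  have "jprime v n i \<le> j"
    unfolding jprime_def by (rule Least_le) (use J G in auto)
  thus ?thesis by (simp add: j_def)
qed

end
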